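(* Let $0<d<\pi/2$ and let $\mathscr{D}_d=\{\zeta\in\mathbb{C}:|\Im\zeta|<d\}$, $\mathscr{D}_d^{-}=\{\zeta\in\mathscr{D}_d:\Re\zeta<0\}$, $\mathscr{D}_d^{+}=\{\zeta\in\mathscr{D}_d:\Re\zeta\ge 0\}$. Let $\psi(t)=\sinh t$. Assume $f$ is analytic on $\psi(\mathscr{D}_d)$ and there are constants $K,\alpha,\beta>0$ such that $|f(z)|\le K\,|1+z^2|^{-(\alpha+1)/2}$ for all $z\in\psi(\mathscr{D}_d^{-})$ and $|f(z)|\le K\,|1+z^2|^{-(\beta+1)/2}$ for all $z\in\psi(\mathscr{D}_d^{+})$. Let $\mu=\min\{\alpha,\beta\}$, $\nu=\max\{\alpha,\beta\}$, let $n$ be a positive integer, $h=\sqrt{2\pi d/(\mu n)}$, and let $M=n$, $N=\lceil \alpha n/\beta\rceil$ if $\mu=\alpha$, and $N=n$, $M=\lceil\beta n/\alpha\rceil$ if $\mu=\beta$. Then \[ \left|\int_{-\infty}^{\infty} f(t)\,dt-h\sum_{k=-M}^{N} f(\psi(kh))\psi'(kh)\right|\le C_1\,e^{-\sqrt{2\pi d\mu n}}, \qquad C_1=\frac{2^{\nu+1}K}{\mu}\left\{\frac{2}{(1-e^{-\sqrt{2\pi d\mu}})(\cos d)^{\nu}}+1\right\}. \]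
   Context: $\psi(\mathscr{D}_d)=\{\psi(\zeta):\zeta\in\mathscr{D}_d\}$ denotes the image of the strip; similarly for $\mathscr{D}_d^{\pm}$. Powers of complex quantities are taken as moduli, so all bounds are real. *)

theory Defs
  imports "HOL-Complex_Analysis.Complex_Analysis"
begin

definition strip :: "real \<Rightarrow> complex set" where
  "strip d = {z. \<bar>Im z\<bar> < d}"

definition strip_minus :: "real \<Rightarrow> complex set" where
  "strip_minus d = {z \<in> strip d. Re z < 0}"

definition strip_plus :: "real \<Rightarrow> complex set" where
  "strip_plus d = {z \<in> strip d. Re z \<ge> 0}"

end

theory Submission
  imports Defs "HOL-Real_Asymp.Real_Asymp"
begin

lemma Re_cosh_complex: "Re (cosh (z::complex)) = cosh (Re z) * cos (Im z)"
  by (simp add: cosh_field_def Re_exp cosh_def field_simps)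

lemma norm_cosh_ge: 
  fixes z :: complex
  shows "cosh (Re z) * cos (Im z) \<le> cmod (cosh z)"
  by (metis Re_cosh_complex abs_ge_self abs_Re_le_cmod order_trans)

lemma cosh_ge_half_exp_abs: "exp \<bar>x\<bar> / 2 \<le> cosh (x::real)"
  by (cases "x \<ge> 0") (auto simp: cosh_def)

lemma cot_bottom:
  fixes u :: complex
  assumes "Im u < 0"
  shows "cmod (cos u / sin u - \<i>) \<le> 2 * exp (2 * Im u) / (1 - exp (2 * Im u))"
proof -
  define t where "t = - Im u"
  have t: "t > 0" using assms by (simp add: t_def)
  have s: "cmod (sin u) \<ge> (exp t - exp (-t)) / 2"
  proof -
    have "cmod (sin u) = cmod (exp (\<i> * u) - exp (-(\<i> * u))) / 2"
      by (simp add: sin_exp_eq norm_mult norm_divide)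
    also have "\<dots> \<ge> (cmod (exp (\<i> * u)) - cmod (exp (-(\<i> * u)))) / 2"
      by (intro divide_right_mono norm_triangle_ineq2) auto
    finally show ?thesis by (simp add: t_def)
  qed
  have pos: "exp t - exp (-t) > 0" using t by simp
  have "sin u \<noteq> 0" using s pos by auto
  then have "cos u / sin u - \<i> = (cos u - \<i> * sin u) / sin u"
    by (simp add: diff_divide_distrib)
  also have "cos u - \<i> * sin u = exp (-(\<i> * u))"
    by (simp add: exp_minus_Euler)
  finally have "cmod (cos u / sin u - \<i>) = exp (-t) / cmod (sin u)"
    by (simp add: norm_divide t_def)
  also have "\<dots> \<le> exp (-t) / ((exp t - exp (-t)) / 2)"
    using s pos by (intro divide_left_mono) (auto intro!: mult_pos_pos)
  also have "\<dots> = 2 * exp (-2*t) / (1 - exp (-2*t))"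
  proof -
    have "exp (-2*t) = exp (-t) * exp (-t)" by (simp flip: exp_add)
    moreover have "exp t * exp (-t) = 1" by (simp flip: exp_add)
    moreover have "1 - exp (-2*t) > 0" using t by simp
    ultimately show ?thesis using pos by (simp add: field_simps)
  qed
  finally show ?thesis by (simp add: t_def)
qed

lemma cot_top:
  fixes u :: complex
  assumes "Im u > 0"
  shows "cmod (cos u / sin u + \<i>) \<le> 2 * exp (- 2 * Im u) / (1 - exp (- 2 * Im u))"
proof -
  have "cmod (cos (-u) / sin (-u) - \<i>) \<le> 2 * exp (2 * Im (-u)) / (1 - exp (2 * Im (-u)))"
    using assms by (intro cot_bottom) auto
  moreover have e: "cos (-u) / sin (-u) - \<i> = - (cos u / sin u + \<i>)" by simp
  moreover have "cmod (cos u / sin u + \<i>) = cmod (cos (-u) / sin (-u) - \<i>)"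
    by (simp only: e norm_minus_cancel)
  ultimately show ?thesis by simp
qed

lemma cot_vert:
  fixes u :: complex
  assumes "cos (Re u) = 0"
  shows "cmod (cos u) \<le> cmod (sin u)" "sin u \<noteq> 0"
proof -
  have s2: "sin (Re u) ^ 2 = 1" using assms sin_cos_squared_add[of "Re u"] by simp
  have "cmod (cos u) = sqrt ((sin (Re u) * (exp (-(Im u)) - exp (Im u)) / 2)^2)"
    by (simp add: cmod_def Re_cos Im_cos assms)
  also have "\<dots> = sqrt (((exp (-(Im u)) - exp (Im u)) / 2)^2)"
    using s2 by (simp add: power_mult_distrib power_divide)
  also have "\<dots> = \<bar>exp (-(Im u)) - exp (Im u)\<bar> / 2"
    by (simp only: real_sqrt_abs) simp
  finally have c: "cmod (cos u) = \<bar>exp (-(Im u)) - exp (Im u)\<bar> / 2" .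
  have "cmod (sin u) = sqrt ((sin (Re u) * (exp (Im u) + exp (-(Im u))) / 2)^2)"
    by (simp add: cmod_def Re_sin Im_sin assms)
  also have "\<dots> = sqrt (((exp (Im u) + exp (-(Im u))) / 2)^2)"
    using s2 by (simp add: power_mult_distrib power_divide)
  also have "\<dots> = \<bar>exp (Im u) + exp (-(Im u))\<bar> / 2"
    by (simp only: real_sqrt_abs) simp
  finally have s: "cmod (sin u) = (exp (Im u) + exp (-(Im u))) / 2" by simp
  show "cmod (cos u) \<le> cmod (sin u)" unfolding c s
    by (cases "exp (-(Im u)) \<ge> exp (Im u)") auto
  have "cmod (sin u) > 0" unfolding s by (simp add: add_pos_pos)
  then show "sin u \<noteq> 0" by auto
qed

definition cf :: "real \<Rightarrow> complex \<Rightarrow> complex" where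
  "cf h w = of_real (pi/h) * (cos (of_real (pi/h) * w) / sin (of_real (pi/h) * w) - \<i>)"

lemma sin_zero_pts:
  fixes w :: complex
  assumes "h > 0" "sin (of_real (pi/h) * w) = 0"
  shows "\<exists>m::int. w = of_real (of_int m * h)"
proof -
  have "\<exists>m::int. of_real (pi/h) * w = of_real (of_int m * pi)"
    using assms(2) by (simp only: sin_eq_0)
  then obtain m :: int where m: "of_real (pi/h) * w = of_real (of_int m * pi)" by blast
  have "w = of_real (of_int m * pi) / of_real (pi/h)"
    using m assms(1) by (simp add: field_simps)
  also have "\<dots> = of_real (of_int m * h)"
    using assms(1) by (simp add: field_simps)
  finally show ?thesis by blast
qed

lemma at_pts:
  assumes "h > 0"
  shows "of_real (pi/h) * complex_of_real (of_int k * h) = of_real (of_int k * pi)"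
  using assms by (simp add: field_simps)

lemma sin_pts:
  assumes "h > 0"
  shows "sin (of_real (pi/h) * complex_of_real (of_int k * h)) = 0"
  unfolding at_pts[OF assms] using sin_eq_0 by blast

lemma sin_nonzero_near:
  fixes w :: complex
  assumes "h > 0" "dist w (of_real (of_int k * h)) < h" "w \<noteq> of_real (of_int k * h)"
  shows "sin (of_real (pi/h) * w) \<noteq> 0"
proof
  assume "sin (of_real (pi/h) * w) = 0"
  then obtain m :: int where m: "w = of_real (of_int m * h)" using sin_zero_pts assms(1) by blast
  have "m \<noteq> k" using assms(3) m by auto
  then have "\<bar>of_int m - of_int k\<bar> \<ge> (1::real)"
  proof -
    have "\<bar>m - k\<bar> \<ge> 1" using \<open>m \<noteq> k\<close> by linarith
    then have "real_of_int \<bar>m - k\<bar> \<ge> 1" by linarith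
    then show ?thesis by simp
  qed
  moreover have "dist w (of_real (of_int k * h)) = \<bar>of_int m - of_int k\<bar> * h"
  proof -
    have "w - of_real (of_int k * h) = of_real ((of_int m - of_int k) * h)"
      using m by (simp add: algebra_simps)
    then show ?thesis using assms(1) by (simp add: dist_norm abs_mult norm_mult flip: of_int_diff)
  qed
  ultimately show False using assms(1,2) by (smt (verit) mult_le_cancel_right1)
qed

lemma residue_cf:
  assumes "open S" "G holomorphic_on S" "h > 0" "complex_of_real (of_int k * h) \<in> S"
  shows "residue (\<lambda>w. G w * cf h w) (of_real (of_int k * h)) = G (of_real (of_int k * h))"
proof -
  define p where "p = complex_of_real (of_int k * h)"
  define a where "a = complex_of_real (pi/h)"
  define s where "s = S \<inter> ball p h"
  have a0: "a \<noteq> 0" using assms(3) by (simp add: a_def)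
  have sp: "sin (a * p) = 0" using sin_pts[OF assms(3)] by (simp add: a_def p_def)
  have cp: "cos (a * p) \<noteq> 0"
    using sin_cos_squared_add[of "a*p"] sp by auto
  have snz: "sin (a * w) \<noteq> 0" if "w \<in> s - {p}" for w
    using sin_nonzero_near[OF assms(3), of w k] that by (auto simp: s_def p_def a_def dist_commute)
  show ?thesis unfolding p_def[symmetric]
  proof (rule residue_simple'[of s])
    show "open s" using assms(1) by (simp add: s_def open_Int)
    show "p \<in> s" using assms(3,4) by (simp add: s_def p_def)
    show "(\<lambda>w. G w * cf h w) holomorphic_on s - {p}"
      unfolding cf_def a_def[symmetric]
      using snz by (intro holomorphic_intros holomorphic_on_subset[OF assms(2)]) (auto simp: s_def)
    have d: "((\<lambda>w. sin (a * w)) has_field_derivative a * cos (a * p)) (at p)"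
      by (auto intro!: derivative_eq_intros)
    then have l1: "((\<lambda>w. sin (a * w) / (w - p)) \<longlongrightarrow> a * cos (a * p)) (at p)"
      using sp by (simp add: has_field_derivative_iff)
    have l2: "((\<lambda>w. inverse (sin (a * w) / (w - p))) \<longlongrightarrow> inverse (a * cos (a * p))) (at p)"
      using l1 a0 cp by (intro tendsto_inverse) auto
    have cG: "isCont G p" using continuous_on_eq_continuous_at[OF assms(1)]
        holomorphic_on_imp_continuous_on[OF assms(2)] assms(4) unfolding p_def by blast
    have l3: "((\<lambda>w. G w * a * cos (a * w) * inverse (sin (a * w) / (w - p)) - G w * a * \<i> * (w - p))
        \<longlongrightarrow> G p * a * cos (a * p) * inverse (a * cos (a * p)) - G p * a * \<i> * (p - p)) (at p)"
      by (intro tendsto_intros l2 isCont_tendsto_compose[OF cG] tendsto_ident_at) 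
    have veq: "G p * a * cos (a * p) * inverse (a * cos (a * p)) - G p * a * \<i> * (p - p) = G p"
      using a0 cp by (simp add: field_simps)
    have ev: "\<forall>\<^sub>F w in at p. G w * a * cos (a * w) * inverse (sin (a * w) / (w - p)) - G w * a * \<i> * (w - p)
                   = G w * cf h w * (w - p)"
    proof -
      have "\<forall>\<^sub>F w in at p. w \<in> s - {p}"
        using \<open>open s\<close> \<open>p \<in> s\<close> by (simp add: eventually_at_topological) blast
      then show ?thesis
      proof eventually_elim
        case (elim w)
        then have "sin (a * w) \<noteq> 0" "w \<noteq> p" using snz by auto
        then show ?case unfolding cf_def a_def[symmetric] by (simp add: field_simps)
      qed
    qed
    show "((\<lambda>w. G w * cf h w * (w - p)) \<longlongrightarrow> G p) (at p)"
      using Lim_transform_eventually[OF l3[unfolded veq] ev] .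
  qed
qed

lemma int_exp_0X:
  fixes \<mu> X :: real
  assumes "\<mu> > 0" "X \<ge> 0"
  shows "((\<lambda>x. exp (-\<mu>*x)) has_integral (1 - exp (-\<mu>*X))/\<mu>) {0..X}"
proof -
  have "((\<lambda>x. exp (-\<mu>*x)) has_integral (-exp (-\<mu>*X)/\<mu> - (-exp (-\<mu>*0)/\<mu>))) {0..X}"
    using assms
    by (intro fundamental_theorem_of_calculus)
       (auto intro!: derivative_eq_intros simp flip: has_real_derivative_iff_has_vector_derivative)
  then show ?thesis by (simp add: diff_divide_distrib)
qed

lemma int_exp_abs:
  fixes \<mu> X :: real
  assumes "\<mu> > 0" "X \<ge> 0"
  shows "(\<lambda>x. exp (-\<mu>*\<bar>x\<bar>)) integrable_on {-X..X}"
    and "integral {-X..X} (\<lambda>x. exp (-\<mu>*\<bar>x\<bar>)) \<le> 2/\<mu>"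
proof -
  show i: "(\<lambda>x. exp (-\<mu>*\<bar>x\<bar>)) integrable_on {-X..X}"
    by (intro integrable_continuous_interval continuous_intros)
  have a: "integral {0..X} (\<lambda>x. exp (-\<mu>*\<bar>x\<bar>)) = (1 - exp (-\<mu>*X))/\<mu>"
  proof -
    have "integral {0..X} (\<lambda>x. exp (-\<mu>*\<bar>x\<bar>)) = integral {0..X} (\<lambda>x. exp (-\<mu>*x))"
      by (intro integral_cong) auto
    also have "\<dots> = (1 - exp (-\<mu>*X))/\<mu>" using int_exp_0X[OF assms] by (rule integral_unique)
    finally show ?thesis .
  qed
  have b: "integral {-X..0} (\<lambda>x. exp (-\<mu>*\<bar>x\<bar>)) = integral {0..X} (\<lambda>x. exp (-\<mu>*\<bar>x\<bar>))"
    using Henstock_Kurzweil_Integration.integral_reflect_real[of X 0 "\<lambda>x. exp (-\<mu>*\<bar>x\<bar>)"]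
    by (simp only: abs_minus_cancel minus_zero)
  have "integral {-X..X} (\<lambda>x. exp (-\<mu>*\<bar>x\<bar>)) = integral {-X..0} (\<lambda>x. exp (-\<mu>*\<bar>x\<bar>)) + integral {0..X} (\<lambda>x. exp (-\<mu>*\<bar>x\<bar>))"
    using Henstock_Kurzweil_Integration.integral_combine[OF _ _ i, of 0] assms by simp
  also have "\<dots> = 2 * (1 - exp (-\<mu>*X))/\<mu>" using a b by simp
  also have "\<dots> \<le> 2/\<mu>" using assms by (simp add: divide_right_mono)
  finally show "integral {-X..X} (\<lambda>x. exp (-\<mu>*\<bar>x\<bar>)) \<le> 2/\<mu>" .
qed

lemma hline:
  fixes g :: "complex \<Rightarrow> complex"
  assumes "X > 0" "\<mu> > 0" "C \<ge> 0"
    and cont: "continuous_on (closed_segment (Complex (-X) y) (Complex X y)) g"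
    and bnd: "\<And>x. -X \<le> x \<Longrightarrow> x \<le> X \<Longrightarrow> cmod (g (Complex x y)) \<le> C * exp (-\<mu>*\<bar>x\<bar>)"
  shows "cmod (contour_integral (linepath (Complex (-X) y) (Complex X y)) g) \<le> 2*C/\<mu>"
proof -
  have lp: "linepath (Complex (-X) y) (Complex X y) = (+) (Complex 0 y) \<circ> linepath (of_real (-X)) (of_real X)"
    by (auto simp: linepath_def fun_eq_iff complex_eq_iff algebra_simps)
  have "contour_integral (linepath (Complex (-X) y) (Complex X y)) g
      = contour_integral (linepath (of_real (-X)) (of_real X)) (\<lambda>x. g (x + Complex 0 y))"
    unfolding lp contour_integral_translate ..
  also have "\<dots> = integral {-X..X} (\<lambda>x. g (of_real x + Complex 0 y))"
    using assms(1) by (subst contour_integral_linepath_Reals_eq) auto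
  also have "\<dots> = integral {-X..X} (\<lambda>x. g (Complex x y))"
  proof -
    have "\<And>x. complex_of_real x + Complex 0 y = Complex x y" by (simp add: complex_eq_iff)
    then show ?thesis by simp
  qed
  finally have eq: "contour_integral (linepath (Complex (-X) y) (Complex X y)) g = integral {-X..X} (\<lambda>x. g (Complex x y))" .
  have seg: "Complex x y \<in> closed_segment (Complex (-X) y) (Complex X y)" if "x \<in> {-X..X}" for x
    using that assms(1) by (simp add: closed_segment_same_Im closed_segment_eq_real_ivl)
  have ci: "continuous_on {-X..X} (\<lambda>x. g (Complex x y))"
  proof (rule continuous_on_compose2[OF cont])
    show "continuous_on {-X..X} (\<lambda>x. Complex x y)"
      by (intro continuous_intros) 
    show "(\<lambda>x. Complex x y) ` {-X..X} \<subseteq> closed_segment (Complex (- X) y) (Complex X y)"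
      using seg by auto
  qed
  have "cmod (integral {-X..X} (\<lambda>x. g (Complex x y))) \<le> integral {-X..X} (\<lambda>x. C * exp (-\<mu>*\<bar>x\<bar>))"
    using bnd by (intro integral_norm_bound_integral integrable_continuous_interval ci continuous_intros) auto
  also have "\<dots> = C * integral {-X..X} (\<lambda>x. exp (-\<mu>*\<bar>x\<bar>))" by simp
  also have "\<dots> \<le> C * (2/\<mu>)"
    using int_exp_abs(2)[OF assms(2), of X] assms by (intro mult_left_mono) auto
  finally show ?thesis using eq by (simp add: ac_simps)
qed

lemma aux_alg: "(a::complex) * (x - \<i>) + 2 * \<i> * a = a * (x + \<i>)"
  by (simp add: algebra_simps)

lemma cf_bottom:
  assumes "h > 0" "\<delta> > 0" "Im w = -\<delta>"
  shows "cmod (cf h w) \<le> (pi/h) * (2 * exp (-2*pi*\<delta>/h) / (1 - exp (-2*pi*\<delta>/h)))"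
proof -
  define u where "u = complex_of_real (pi/h) * w"
  have Iu: "Im u = -(pi*\<delta>/h)" using assms by (simp add: u_def)
  have "cmod (cos u / sin u - \<i>) \<le> 2 * exp (2 * Im u) / (1 - exp (2 * Im u))"
  proof (intro cot_bottom)
    have "pi*\<delta>/h > 0" using assms by simp
    then show "Im u < 0" using Iu by linarith
  qed
  also have "2 * Im u = -2*pi*\<delta>/h" using Iu by simp
  finally have "cmod (cos u / sin u - \<i>) \<le> 2 * exp (-2*pi*\<delta>/h) / (1 - exp (-2*pi*\<delta>/h))" .
  moreover have "cf h w = of_real (pi/h) * (cos u / sin u - \<i>)" by (simp only: cf_def u_def)
  then have "cmod (cf h w) = (pi/h) * cmod (cos u / sin u - \<i>)"
    using assms(1) by (simp only: norm_mult norm_of_real) simp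
  moreover have "0 \<le> pi/h" using assms(1) by simp
  ultimately show ?thesis by (metis mult_left_mono)
qed

lemma cf_top:
  assumes "h > 0" "\<delta> > 0" "Im w = \<delta>"
  shows "cmod (cf h w + 2 * \<i> * of_real (pi/h)) \<le> (pi/h) * (2 * exp (-2*pi*\<delta>/h) / (1 - exp (-2*pi*\<delta>/h)))"
proof -
  define u where "u = complex_of_real (pi/h) * w"
  have Iu: "Im u = pi*\<delta>/h" using assms by (simp add: u_def)
  have "cmod (cos u / sin u + \<i>) \<le> 2 * exp (- 2 * Im u) / (1 - exp (- 2 * Im u))"
  proof (intro cot_top)
    have "pi*\<delta>/h > 0" using assms by simp
    then show "Im u > 0" using Iu by linarith
  qed
  also have "- 2 * Im u = -2*pi*\<delta>/h" using Iu by simp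
  finally have "cmod (cos u / sin u + \<i>) \<le> 2 * exp (-2*pi*\<delta>/h) / (1 - exp (-2*pi*\<delta>/h))" .
  moreover have "cf h w = of_real (pi/h) * (cos u / sin u - \<i>)" by (simp only: cf_def u_def)
  then have "cf h w + 2 * \<i> * of_real (pi/h) = of_real (pi/h) * (cos u / sin u + \<i>)"
    using aux_alg[of "of_real (pi/h)" "cos u / sin u"] by simp
  then have "cmod (cf h w + 2 * \<i> * of_real (pi/h)) = (pi/h) * cmod (cos u / sin u + \<i>)"
    using assms(1) by (simp only: norm_mult norm_of_real) simp
  moreover have "0 \<le> pi/h" using assms(1) by simp
  ultimately show ?thesis by (metis mult_left_mono)
qed

lemma cf_vert:
  assumes "h > 0" "\<bar>Re w\<bar> = (real A + 1/2) * h"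
  shows "cmod (cf h w) \<le> 2 * pi / h" "sin (of_real (pi/h) * w) \<noteq> 0"
proof -
  define u where "u = complex_of_real (pi/h) * w"
  have "\<bar>Re u\<bar> = (real A + 1/2) * pi" using assms by (simp add: u_def abs_mult)
  then have "Re u = of_int (2 * int A + 1) * (pi/2) \<or> Re u = of_int (-(2 * int A + 1)) * (pi/2)"
    by (cases "Re u \<ge> 0") (simp_all add: algebra_simps)
  moreover have "odd (2 * int A + 1)" "odd (-(2 * int A + 1))" by simp_all
  ultimately have c0: "cos (Re u) = 0"
    unfolding cos_zero_iff_int by blast
  have "cmod (cos u / sin u - \<i>) \<le> cmod (cos u / sin u) + 1"
    using norm_triangle_ineq4[of "cos u / sin u" \<i>] by simp
  also have "cmod (cos u / sin u) \<le> 1"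
    using cot_vert[OF c0] by (simp add: norm_divide divide_le_eq_1)
  finally have "cmod (cos u / sin u - \<i>) \<le> 2" by simp
  moreover have "cf h w = of_real (pi/h) * (cos u / sin u - \<i>)" by (simp only: cf_def u_def)
  then have "cmod (cf h w) = (pi/h) * cmod (cos u / sin u - \<i>)"
    using assms(1) by (simp only: norm_mult norm_of_real) simp
  ultimately show "cmod (cf h w) \<le> 2 * pi / h" using assms(1)
    by (metis divide_pos_pos mult_left_mono pi_gt_zero less_imp_le times_divide_eq_left mult.commute)
  show "sin (of_real (pi/h) * w) \<noteq> 0" using cot_vert(2)[OF c0] by (simp add: u_def)
qed

lemma aux_div: "(z::complex) \<noteq> 0 \<Longrightarrow> z * s = T \<Longrightarrow> a * s = (a / z) * T"
  by auto

lemma tri3: "norm ((x::complex) + y + z) \<le> norm x + norm y + norm z"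
  using norm_triangle_ineq[of "x+y" z] norm_triangle_ineq[of x y] by linarith

lemma tri4: "norm ((x::complex) + y + z + w) \<le> norm x + norm y + norm z + norm w"
  using norm_triangle_ineq[of "x+y+z" w] tri3[of x y z] by linarith

lemma disc_finite:
  fixes G :: "complex \<Rightarrow> complex" and h d \<delta> B \<mu> :: real and A :: nat
  assumes holo: "G holomorphic_on {z. \<bar>Im z\<bar> < d}"
    and \<delta>0: "0 < \<delta>" and \<delta>d: "\<delta> < d" and h0: "h > 0" and \<mu>0: "\<mu> > 0" and B0: "B \<ge> 0"
    and bnd: "\<And>z. \<bar>Im z\<bar> \<le> \<delta> \<Longrightarrow> cmod (G z) \<le> B * exp (-\<mu> * \<bar>Re z\<bar>)"
  shows "cmod (of_real h * (\<Sum>k=-int A..int A. G (of_real (of_int k * h)))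
           - integral {-((real A + 1/2) * h)..(real A + 1/2) * h} (\<lambda>x. G (of_real x)))
         \<le> 4 * exp (-2*pi*\<delta>/h) / (1 - exp (-2*pi*\<delta>/h)) * B / \<mu>
            + 6 * \<delta> * B * exp (-\<mu> * ((real A + 1/2) * h))"
proof -
  define X where "X = (real A + 1/2) * h"
  define q where "q = exp (-2*pi*\<delta>/h)"
  have X0: "X > 0" using h0 by (simp add: X_def)
  have q0: "q > 0" by (simp add: q_def)
  have q1: "q < 1" using h0 \<delta>0 by (simp add: q_def)
  define S where "S = {z. \<bar>Re z\<bar> < (real A + 1) * h \<and> \<bar>Im z\<bar> < d}"
  define pts where "pts = (\<lambda>k. complex_of_real (of_int k * h)) ` {-int A..int A}"
  define c where "c = 2 * \<i> * complex_of_real (pi/h)"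
  define \<Phi> where "\<Phi> = (\<lambda>w. G w * cf h w)"
  define \<Psi> where "\<Psi> = (\<lambda>w. G w * (cf h w + c))"
  define P1 where "P1 = Complex (-X) (-\<delta>)"
  define P2 where "P2 = Complex X (-\<delta>)"
  define P3 where "P3 = Complex X \<delta>"
  define P4 where "P4 = Complex (-X) \<delta>"
  define Q1 where "Q1 = Complex (-X) 0"
  define Q2 where "Q2 = Complex X 0"
  define s where "s = (\<Sum>k=-int A..int A. G (of_real (of_int k * h)))"
  have XS: "X < (real A + 1) * h" using h0 by (simp add: X_def)
  have Seq: "S = {z. Re z < (real A + 1) * h} \<inter> {z. Re z > -((real A + 1) * h)} \<inter> {z. Im z < d} \<inter> {z. Im z > -d}"
    by (auto simp: S_def)
  have openS: "open S" unfolding Seq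
    by (intro open_Int open_halfspace_Re_lt open_halfspace_Re_gt open_halfspace_Im_lt open_halfspace_Im_gt)
  have convS: "convex S" unfolding Seq
    by (intro convex_Int convex_halfspace_Re_lt convex_halfspace_Re_gt convex_halfspace_Im_lt convex_halfspace_Im_gt)
  have connS: "connected S" using convS by (simp add: convex_connected)
  have holoS: "G holomorphic_on S" by (rule holomorphic_on_subset[OF holo]) (auto simp: S_def)
  have finpts: "finite pts" by (simp add: pts_def)
  have ptsS: "pts \<subseteq> S"
  proof
    fix p assume "p \<in> pts"
    then obtain k where k: "k \<in> {-int A..int A}" "p = of_real (of_int k * h)" by (auto simp: pts_def)
    have "\<bar>real_of_int k\<bar> \<le> real A" using k(1) by auto
    then have "\<bar>real_of_int k\<bar> * h < (real A + 1) * h" using h0 by (intro mult_strict_right_mono) auto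
    then show "p \<in> S" using k(2) h0 \<delta>0 \<delta>d by (simp add: S_def abs_mult)
  qed
  have sinnz: "sin (of_real (pi/h) * w) \<noteq> 0" if "w \<in> S - pts" for w
  proof
    assume "sin (of_real (pi/h) * w) = 0"
    then obtain m :: int where m: "w = of_real (of_int m * h)" using sin_zero_pts h0 by blast
    have "\<bar>real_of_int m\<bar> * h < (real A + 1) * h" using that m h0 by (simp add: S_def abs_mult)
    then have "\<bar>real_of_int m\<bar> < real A + 1" using h0 by simp
    then have "m \<in> {-int A..int A}" by auto
    then show False using that m by (auto simp: pts_def)
  qed
  have holo\<Phi>: "\<Phi> holomorphic_on S - pts"
    unfolding \<Phi>_def cf_def using sinnz
    by (intro holomorphic_intros holomorphic_on_subset[OF holoS]) auto
  have holo\<Psi>: "\<Psi> holomorphic_on S - pts"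
    unfolding \<Psi>_def cf_def using sinnz
    by (intro holomorphic_intros holomorphic_on_subset[OF holoS]) auto
  have cont\<Phi>: "continuous_on (S - pts) \<Phi>" by (rule holomorphic_on_imp_continuous_on[OF holo\<Phi>])
  have cont\<Psi>: "continuous_on (S - pts) \<Psi>" by (rule holomorphic_on_imp_continuous_on[OF holo\<Psi>])
  have contG: "continuous_on S G" by (rule holomorphic_on_imp_continuous_on[OF holoS])
  have cboxS: "cbox P1 P3 \<subseteq> S"
    using XS \<delta>d by (auto simp: S_def P1_def P3_def in_cbox_complex_iff)
  have ptsbox: "pts \<subseteq> box P1 P3"
  proof
    fix p assume "p \<in> pts"
    then obtain k where k: "k \<in> {-int A..int A}" "p = of_real (of_int k * h)" by (auto simp: pts_def)
    have "\<bar>real_of_int k\<bar> \<le> real A" using k(1) by auto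
    then have "\<bar>real_of_int k\<bar> * h < X" using h0 unfolding X_def by (intro mult_strict_right_mono) auto
    then have "\<bar>real_of_int k * h\<bar> < X" using h0 by (simp add: abs_mult)
    then show "p \<in> box P1 P3" using k(2) h0 \<delta>0
      by (auto simp: P1_def P3_def in_box_complex_iff abs_less_iff)
  qed
  have ord13: "Re P1 \<le> Re P3" "Im P1 \<le> Im P3" using X0 \<delta>0 by (auto simp: P1_def P3_def)
  have pimg: "path_image (rectpath P1 P3) \<subseteq> S - pts"
    using path_image_rectpath_cbox_minus_box[OF ord13] cboxS ptsbox by auto
  have res: "contour_integral (rectpath P1 P3) \<Phi> = 2 * pi * \<i> * s"
  proof -
    have homo: "\<forall>z. z \<notin> S \<longrightarrow> winding_number (rectpath P1 P3) z = 0"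
      using cboxS by (auto intro!: winding_number_rectpath_outside[OF ord13])
    have "contour_integral (rectpath P1 P3) \<Phi> = 2 * pi * \<i> * (\<Sum>p\<in>pts. winding_number (rectpath P1 P3) p * residue \<Phi> p)"
      by (rule Residue_theorem[OF openS connS finpts holo\<Phi> valid_path_rectpath _ pimg homo]) simp
    also have "(\<Sum>p\<in>pts. winding_number (rectpath P1 P3) p * residue \<Phi> p) = (\<Sum>p\<in>pts. G p)"
    proof (intro sum.cong refl)
      fix p assume p: "p \<in> pts"
      then obtain k where k: "p = of_real (of_int k * h)" by (auto simp: pts_def)
      have "winding_number (rectpath P1 P3) p = 1" using p ptsbox by (intro winding_number_rectpath) auto
      moreover have "residue \<Phi> p = G p"
        unfolding \<Phi>_def k using residue_cf[OF openS holoS h0, of k] p ptsS k by auto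
      ultimately show "winding_number (rectpath P1 P3) p * residue \<Phi> p = G p" by simp
    qed
    also have "(\<Sum>p\<in>pts. G p) = s"
      unfolding pts_def s_def using h0
      by (subst sum.reindex) (auto simp: inj_on_def)
    finally show ?thesis .
  qed
  have rp: "rectpath P1 P3 = linepath P1 P2 +++ linepath P2 P3 +++ linepath P3 P4 +++ linepath P4 P1"
    by (simp add: rectpath_def Let_def P1_def P2_def P3_def P4_def)
  have segs: "closed_segment P1 P2 \<subseteq> S - pts" "closed_segment P2 P3 \<subseteq> S - pts"
     "closed_segment P3 P4 \<subseteq> S - pts" "closed_segment P4 P1 \<subseteq> S - pts"
    using pimg unfolding rp by (auto simp: path_image_join)
  have hci: "(F has_contour_integral contour_integral (linepath a b) F) (linepath a b)"
    if "continuous_on (closed_segment a b) F" for F a b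
    by (rule has_contour_integral_integral[OF contour_integrable_continuous_linepath[OF that]])
  define I1 where "I1 = contour_integral (linepath P1 P2) \<Phi>"
  define I2 where "I2 = contour_integral (linepath P2 P3) \<Phi>"
  define I3 where "I3 = contour_integral (linepath P3 P4) \<Phi>"
  define I4 where "I4 = contour_integral (linepath P4 P1) \<Phi>"
  have h1: "(\<Phi> has_contour_integral I1) (linepath P1 P2)"
    unfolding I1_def by (intro hci continuous_on_subset[OF cont\<Phi> segs(1)])
  have h2: "(\<Phi> has_contour_integral I2) (linepath P2 P3)"
    unfolding I2_def by (intro hci continuous_on_subset[OF cont\<Phi> segs(2)])
  have h3: "(\<Phi> has_contour_integral I3) (linepath P3 P4)"
    unfolding I3_def by (intro hci continuous_on_subset[OF cont\<Phi> segs(3)])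
  have h4: "(\<Phi> has_contour_integral I4) (linepath P4 P1)"
    unfolding I4_def by (intro hci continuous_on_subset[OF cont\<Phi> segs(4)])
  have "(\<Phi> has_contour_integral (I1 + (I2 + (I3 + I4)))) (rectpath P1 P3)"
    unfolding rp
    by (intro has_contour_integral_join h1 h2 h3 h4 valid_path_join valid_path_linepath) auto
  then have eq1: "I1 + I2 + I3 + I4 = 2 * pi * \<i> * s"
    using res contour_integral_unique by (metis add.assoc)
  have ordQ: "Re Q1 \<le> Re P3" "Im Q1 \<le> Im P3" using X0 \<delta>0 by (auto simp: Q1_def P3_def)
  have cboxQ: "cbox Q1 P3 \<subseteq> S"
    using XS \<delta>d \<delta>0 by (auto simp: S_def Q1_def P3_def in_cbox_complex_iff)
  have rq: "rectpath Q1 P3 = linepath Q1 Q2 +++ linepath Q2 P3 +++ linepath P3 P4 +++ linepath P4 Q1"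
    by (simp add: rectpath_def Let_def Q1_def Q2_def P3_def P4_def)
  have pimgQ: "path_image (rectpath Q1 P3) \<subseteq> S"
    using path_image_rectpath_subset_cbox[OF ordQ] cboxQ by auto
  have segsQ: "closed_segment Q1 Q2 \<subseteq> S" "closed_segment Q2 P3 \<subseteq> S"
     "closed_segment P3 P4 \<subseteq> S" "closed_segment P4 Q1 \<subseteq> S"
    using pimgQ unfolding rq by (auto simp: path_image_join)
  define J1 where "J1 = contour_integral (linepath Q1 Q2) G"
  define J2 where "J2 = contour_integral (linepath Q2 P3) G"
  define J3 where "J3 = contour_integral (linepath P3 P4) G"
  define J4 where "J4 = contour_integral (linepath P4 Q1) G"
  have g1: "(G has_contour_integral J1) (linepath Q1 Q2)"
    unfolding J1_def by (intro hci continuous_on_subset[OF contG segsQ(1)])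
  have g2: "(G has_contour_integral J2) (linepath Q2 P3)"
    unfolding J2_def by (intro hci continuous_on_subset[OF contG segsQ(2)])
  have g3: "(G has_contour_integral J3) (linepath P3 P4)"
    unfolding J3_def by (intro hci continuous_on_subset[OF contG segsQ(3)])
  have g4: "(G has_contour_integral J4) (linepath P4 Q1)"
    unfolding J4_def by (intro hci continuous_on_subset[OF contG segsQ(4)])
  have "(G has_contour_integral (J1 + (J2 + (J3 + J4)))) (rectpath Q1 P3)"
    unfolding rq
    by (intro has_contour_integral_join g1 g2 g3 g4 valid_path_join valid_path_linepath) auto
  moreover have "(G has_contour_integral 0) (rectpath Q1 P3)"
    by (rule Cauchy_theorem_convex_simple[OF holoS convS valid_path_rectpath pimgQ]) simp
  ultimately have eq2: "J1 + J2 + J3 + J4 = 0"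
    using has_contour_integral_unique by (metis add.assoc)
  define I3' where "I3' = contour_integral (linepath P3 P4) \<Psi>"
  have h3': "(\<Psi> has_contour_integral I3') (linepath P3 P4)"
    unfolding I3'_def by (intro hci continuous_on_subset[OF cont\<Psi> segs(3)])
  have "((\<lambda>x. \<Psi> x - c * G x) has_contour_integral (I3' - c * J3)) (linepath P3 P4)"
    by (intro has_contour_integral_diff h3' has_contour_integral_lmul g3)
  moreover have "(\<lambda>x. \<Psi> x - c * G x) = \<Phi>"
    by (auto simp: fun_eq_iff \<Psi>_def \<Phi>_def algebra_simps)
  ultimately have eq3: "I3 = I3' - c * J3" using h3 has_contour_integral_unique by metis
  have J1eq: "J1 = integral {-X..X} (\<lambda>x. G (of_real x))"
    unfolding J1_def using X0
    by (subst contour_integral_linepath_Reals_eq) (auto simp: Q1_def Q2_def complex_is_Real_iff)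
  have key: "of_real h * s - J1 = (of_real h / (2 * pi * \<i>)) * (I1 + I2 + I3' + I4) + J2 + J4"
  proof -
    have "2 * pi * \<i> * s = I1 + I2 + I3' + I4 + c * (J1 + J2 + J4)"
      using eq1 eq2 eq3 by algebra
    then have "of_real h * s = (of_real h / (2 * pi * \<i>)) * (I1 + I2 + I3' + I4 + c * (J1 + J2 + J4))"
      by (rule aux_div[rotated]) simp
    also have "\<dots> = (of_real h / (2 * pi * \<i>)) * (I1 + I2 + I3' + I4) + ((of_real h / (2 * pi * \<i>)) * c) * (J1 + J2 + J4)"
      by (simp only: distrib_left mult.assoc)
    also have "(of_real h / (2 * pi * \<i>)) * c = 1"
      using h0 by (simp add: c_def field_simps)
    finally show ?thesis by simp
  qed
  have bndX: "cmod (G w) \<le> B * exp (-\<mu>*X)" if "\<bar>Re w\<bar> = X" "\<bar>Im w\<bar> \<le> \<delta>" for w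
    using bnd[OF that(2)] that(1) by simp
  have cfv: "cmod (cf h w) \<le> 2*pi/h" if "\<bar>Re w\<bar> = X" for w
    using cf_vert(1)[OF h0, of w A] that by (simp add: X_def)
  define C where "C = (pi/h) * (2*q/(1-q)) * B"
  have C0: "C \<ge> 0" using h0 q0 q1 B0 by (simp add: C_def)
  have bI1: "cmod I1 \<le> 2 * C / \<mu>"
    unfolding I1_def P1_def P2_def
  proof (rule hline[OF X0 \<mu>0 C0])
    show "continuous_on (closed_segment (Complex (-X) (-\<delta>)) (Complex X (-\<delta>))) \<Phi>"
      using continuous_on_subset[OF cont\<Phi> segs(1)] by (simp add: P1_def P2_def)
    fix x assume "-X \<le> x" "x \<le> X"
    have "cmod (\<Phi> (Complex x (-\<delta>))) = cmod (G (Complex x (-\<delta>))) * cmod (cf h (Complex x (-\<delta>)))"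
      by (simp add: \<Phi>_def norm_mult)
    also have "\<dots> \<le> (B * exp(-\<mu>*\<bar>x\<bar>)) * ((pi/h) * (2*q/(1-q)))"
      using bnd[of "Complex x (-\<delta>)"] cf_bottom[OF h0 \<delta>0, of "Complex x (-\<delta>)"] \<delta>0 B0
      by (intro mult_mono) (auto simp: q_def)
    finally show "cmod (\<Phi> (Complex x (-\<delta>))) \<le> C * exp(-\<mu>*\<bar>x\<bar>)" by (simp add: C_def ac_simps)
  qed
  have bI3: "cmod I3' \<le> 2 * C / \<mu>"
  proof -
    have "I3' = - contour_integral (linepath P4 P3) \<Psi>"
      unfolding I3'_def by (intro contour_integral_reverse_linepath continuous_on_subset[OF cont\<Psi> segs(3)])
    then have "cmod I3' = cmod (contour_integral (linepath P4 P3) \<Psi>)" by simp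
    also have "\<dots> \<le> 2 * C / \<mu>"
      unfolding P4_def P3_def
    proof (rule hline[OF X0 \<mu>0 C0])
      show "continuous_on (closed_segment (Complex (-X) \<delta>) (Complex X \<delta>)) \<Psi>"
        using continuous_on_subset[OF cont\<Psi> segs(3)] by (simp add: P3_def P4_def closed_segment_commute)
      fix x assume "-X \<le> x" "x \<le> X"
      have "cmod (\<Psi> (Complex x \<delta>)) = cmod (G (Complex x \<delta>)) * cmod (cf h (Complex x \<delta>) + c)"
        by (simp add: \<Psi>_def norm_mult)
      also have "\<dots> \<le> (B * exp(-\<mu>*\<bar>x\<bar>)) * ((pi/h) * (2*q/(1-q)))"
        using bnd[of "Complex x \<delta>"] cf_top[OF h0 \<delta>0, of "Complex x \<delta>"] \<delta>0 B0
        by (intro mult_mono) (auto simp: q_def c_def)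
      finally show "cmod (\<Psi> (Complex x \<delta>)) \<le> C * exp(-\<mu>*\<bar>x\<bar>)" by (simp add: C_def ac_simps)
    qed
    finally show ?thesis .
  qed
  define V where "V = B * exp (-\<mu>*X) * (2*pi/h)"
  have V0: "V \<ge> 0" using B0 h0 by (simp add: V_def)
  have bI2: "cmod I2 \<le> V * (2*\<delta>)"
  proof -
    have "cmod I2 \<le> V * cmod (P3 - P2)"
      unfolding I2_def
    proof (rule contour_integral_bound_linepath[OF has_contour_integral_integrable[OF h2] V0])
      fix w assume "w \<in> closed_segment P2 P3"
      then have w: "\<bar>Re w\<bar> = X" "\<bar>Im w\<bar> \<le> \<delta>" using \<delta>0 X0
        by (auto simp: P2_def P3_def closed_segment_same_Re closed_segment_eq_real_ivl)
      have "cmod (\<Phi> w) = cmod (G w) * cmod (cf h w)" by (simp add: \<Phi>_def norm_mult)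
      also have "\<dots> \<le> (B * exp (-\<mu>*X)) * (2*pi/h)"
        using bndX[of w] cfv[of w] w B0 by (intro mult_mono) auto
      finally show "cmod (\<Phi> w) \<le> V" by (simp add: V_def)
    qed
    also have "cmod (P3 - P2) = 2*\<delta>"
    proof -
      have "P3 - P2 = \<i> * of_real (2*\<delta>)" by (simp add: complex_eq_iff P1_def P2_def P3_def P4_def)
      then show ?thesis using \<delta>0 by (simp add: norm_mult)
    qed
    finally show ?thesis .
  qed
  have bI4: "cmod I4 \<le> V * (2*\<delta>)"
  proof -
    have "cmod I4 \<le> V * cmod (P1 - P4)"
      unfolding I4_def
    proof (rule contour_integral_bound_linepath[OF has_contour_integral_integrable[OF h4] V0])
      fix w assume "w \<in> closed_segment P4 P1"
      then have w: "\<bar>Re w\<bar> = X" "\<bar>Im w\<bar> \<le> \<delta>" using \<delta>0 X0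
        by (auto simp: P4_def P1_def closed_segment_same_Re closed_segment_eq_real_ivl)
      have "cmod (\<Phi> w) = cmod (G w) * cmod (cf h w)" by (simp add: \<Phi>_def norm_mult)
      also have "\<dots> \<le> (B * exp (-\<mu>*X)) * (2*pi/h)"
        using bndX[of w] cfv[of w] w B0 by (intro mult_mono) auto
      finally show "cmod (\<Phi> w) \<le> V" by (simp add: V_def)
    qed
    also have "cmod (P1 - P4) = 2*\<delta>"
    proof -
      have "P1 - P4 = - \<i> * of_real (2*\<delta>)" by (simp add: complex_eq_iff P1_def P2_def P3_def P4_def)
      then show ?thesis using \<delta>0 by (simp add: norm_mult)
    qed
    finally show ?thesis .
  qed
  define W where "W = B * exp (-\<mu>*X)"
  have W0: "W \<ge> 0" using B0 by (simp add: W_def)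
  have bJ2: "cmod J2 \<le> W * \<delta>"
  proof -
    have "cmod J2 \<le> W * cmod (P3 - Q2)"
      unfolding J2_def
    proof (rule contour_integral_bound_linepath[OF has_contour_integral_integrable[OF g2] W0])
      fix w assume "w \<in> closed_segment Q2 P3"
      then have w: "\<bar>Re w\<bar> = X" "\<bar>Im w\<bar> \<le> \<delta>" using \<delta>0 X0
        by (auto simp: Q2_def P3_def closed_segment_same_Re closed_segment_eq_real_ivl)
      show "cmod (G w) \<le> W" using bndX[OF w] by (simp add: W_def)
    qed
    also have "cmod (P3 - Q2) = \<delta>" using \<delta>0 by (simp add: Q2_def P3_def cmod_def)
    finally show ?thesis .
  qed
  have bJ4: "cmod J4 \<le> W * \<delta>"
  proof -
    have "cmod J4 \<le> W * cmod (Q1 - P4)"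
      unfolding J4_def
    proof (rule contour_integral_bound_linepath[OF has_contour_integral_integrable[OF g4] W0])
      fix w assume "w \<in> closed_segment P4 Q1"
      then have w: "\<bar>Re w\<bar> = X" "\<bar>Im w\<bar> \<le> \<delta>" using \<delta>0 X0
        by (auto simp: Q1_def P4_def closed_segment_same_Re closed_segment_eq_real_ivl)
      show "cmod (G w) \<le> W" using bndX[OF w] by (simp add: W_def)
    qed
    also have "cmod (Q1 - P4) = \<delta>" using \<delta>0 by (simp add: Q1_def P4_def cmod_def)
    finally show ?thesis .
  qed
  have nh: "cmod (of_real h / (2 * pi * \<i>)) = h / (2*pi)"
    using h0 by (simp add: norm_divide norm_mult)
  have "cmod (of_real h * s - J1) \<le> cmod (of_real h / (2 * pi * \<i>)) * cmod (I1 + I2 + I3' + I4) + cmod J2 + cmod J4"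
    unfolding key norm_mult[symmetric] by (rule tri3)
  also have "\<dots> \<le> (h/(2*pi)) * (2*C/\<mu> + V*(2*\<delta>) + 2*C/\<mu> + V*(2*\<delta>)) + W*\<delta> + W*\<delta>"
  proof -
    have "cmod (I1 + I2 + I3' + I4) \<le> cmod I1 + cmod I2 + cmod I3' + cmod I4"
      by (rule tri4)
    also have "\<dots> \<le> 2*C/\<mu> + V*(2*\<delta>) + 2*C/\<mu> + V*(2*\<delta>)"
      using bI1 bI2 bI3 bI4 by linarith
    finally have "cmod (I1 + I2 + I3' + I4) \<le> 2*C/\<mu> + V*(2*\<delta>) + 2*C/\<mu> + V*(2*\<delta>)" .
    then show ?thesis unfolding nh using bJ2 bJ4 h0
      by (intro add_mono mult_left_mono) auto
  qed
  also have "\<dots> = 4*((h/(2*pi))*C)/\<mu> + 4*\<delta>*((h/(2*pi))*V) + 2*\<delta>*W"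
    using \<mu>0 by (simp add: field_simps)
  also have "(h/(2*pi))*C = q/(1-q)*B"
  proof -
    have "1 - q \<noteq> 0" using q1 by simp
    then show ?thesis using h0 by (simp add: C_def field_simps)
  qed
  also have "(h/(2*pi))*V = W"
    using h0 by (simp add: V_def W_def field_simps)
  also have "4*(q/(1-q)*B)/\<mu> + 4*\<delta>*W + 2*\<delta>*W = 4 * q / (1 - q) * B / \<mu> + 6 * \<delta> * B * exp (-\<mu> * X)"
    by (simp add: W_def algebra_simps)
  finally have "cmod (of_real h * s - integral {-X..X} (\<lambda>x. G (of_real x)))
      \<le> 4 * q / (1 - q) * B / \<mu> + 6 * \<delta> * B * exp (-\<mu> * X)" unfolding J1eq .
  then show ?thesis unfolding X_def q_def s_def .
qed

lemma exp_abs_integrable: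
  fixes \<mu> :: real
  assumes "\<mu> > 0"
  shows "(\<lambda>x::real. exp (-\<mu>*\<bar>x\<bar>)) integrable_on UNIV"
proof -
  let ?f = "\<lambda>x::real. exp (-\<mu>*\<bar>x\<bar>)"
  have i1: "?f integrable_on {0..}"
  proof -
    have "(\<lambda>x. exp (-\<mu>*x)) integrable_on {0..}" using integrable_on_exp_minus_to_infinity[OF assms] .
    then show ?thesis by (subst integrable_cong[of _ _ "\<lambda>x. exp (-\<mu>*x)"]) auto
  qed
  have "?f absolutely_integrable_on (uminus ` {0..})"
  proof -
    have "(\<lambda>x. \<bar>-1\<bar> * ?f (- x)) absolutely_integrable_on {0..} \<and>
           integral {0..} (\<lambda>x. \<bar>-1\<bar> * ?f (- x)) = integral {0..} ?f"
      using i1 by (auto intro!: nonnegative_absolutely_integrable_1)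
    moreover have der: "\<And>x. x \<in> {0..} \<Longrightarrow> (uminus has_real_derivative -1) (at x within {0..})"
      by (auto intro!: derivative_eq_intros)
    ultimately show ?thesis
      using has_absolute_integral_change_of_variables_1'[of "{0..}" uminus "\<lambda>_. -1" ?f "integral {0..} ?f", OF _ der]
      by simp
  qed
  moreover have "uminus ` {0..} = {..(0::real)}"
    by (auto simp: image_iff intro!: exI[of _ "- _"])
  ultimately have i2: "?f integrable_on {..0}" by (auto dest: absolutely_integrable_on_def[THEN iffD1])
  have "(?f has_integral (integral {..0} ?f + integral {0..} ?f)) ({..0} \<union> {0..})"
    by (intro has_integral_Un i1[THEN integrable_integral] i2[THEN integrable_integral])
       (auto intro: negligible_subset[OF negligible_sing[of 0]])
  moreover have "{..0} \<union> {0..} = (UNIV :: real set)" by auto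
  ultimately show ?thesis by (auto simp: integrable_on_def)
qed

lemma limit_integral:
  fixes G :: "real \<Rightarrow> complex" and h :: real
  assumes "continuous_on UNIV G" "\<mu> > 0" "h > 0"
    and bnd: "\<And>x. cmod (G x) \<le> B * exp (-\<mu>*\<bar>x\<bar>)"
  shows "G absolutely_integrable_on UNIV"
    and "(\<lambda>A::nat. integral {-((real A + 1/2) * h)..(real A + 1/2) * h} G) \<longlonglongrightarrow> integral UNIV G"
proof -
  have ie: "(\<lambda>x. B * exp (-\<mu>*\<bar>x\<bar>)) integrable_on UNIV"
    using exp_abs_integrable[OF assms(2)] by (rule integrable_on_mult_right)
  show "G absolutely_integrable_on UNIV"
  proof (rule measurable_bounded_by_integrable_imp_absolutely_integrable[OF _ _ ie])
    show "G \<in> borel_measurable (lebesgue_on UNIV)"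
      by (rule continuous_imp_measurable_on_sets_lebesgue[OF assms(1)]) simp
    show "UNIV \<in> sets lebesgue" by simp
    show "\<And>x. x \<in> UNIV \<Longrightarrow> norm (G x) \<le> B * exp (-\<mu>*\<bar>x\<bar>)" by (rule bnd)
  qed
  define X where "X = (\<lambda>A::nat. (real A + 1/2) * h)"
  define g where "g = (\<lambda>A x. if x \<in> {-X A..X A} then G x else 0)"
  have gi: "g A integrable_on UNIV" for A
    unfolding g_def integrable_restrict_UNIV
    by (intro integrable_continuous_interval continuous_on_subset[OF assms(1)]) auto
  have conv: "(\<lambda>A. g A x) \<longlonglongrightarrow> G x" for x
  proof -
    obtain N where N: "\<bar>x\<bar>/h \<le> real N" using real_arch_simple by blast
    have "\<forall>\<^sub>F A in sequentially. real A \<ge> \<bar>x\<bar>/h"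
      unfolding eventually_sequentially by (rule exI[of _ N]) (auto intro: order_trans[OF N])
    then have "\<forall>\<^sub>F A in sequentially. g A x = G x"
    proof eventually_elim
      case (elim A)
      then have "\<bar>x\<bar> \<le> real A * h" using assms(3) by (simp add: field_simps)
      also have "\<dots> \<le> X A" using assms(3) by (simp add: X_def algebra_simps)
      finally show ?case by (auto simp: g_def abs_le_iff)
    qed
    then show ?thesis by (rule tendsto_eventually)
  qed
  have "(\<lambda>A. integral UNIV (g A)) \<longlonglongrightarrow> integral UNIV G"
  proof (rule dominated_convergence(2)[OF gi ie _ conv])
    have B0: "B \<ge> 0" using bnd[of 0] norm_ge_zero[of "G 0"] by (simp del: norm_ge_zero)
    fix A x
    show "norm (g A x) \<le> B * exp (-\<mu>*\<bar>x\<bar>)" using bnd[of x] B0 by (auto simp: g_def)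
  qed
  moreover have "integral UNIV (g A) = integral {-X A..X A} G" for A
    unfolding g_def by (rule integral_restrict_UNIV)
  ultimately show "(\<lambda>A::nat. integral {-((real A + 1/2) * h)..(real A + 1/2) * h} G) \<longlonglongrightarrow> integral UNIV G"
    by (simp add: X_def)
qed

lemma geo_int:
  fixes c h :: real and m :: int
  assumes "c > 0" "h > 0"
  shows "h * (\<Sum>j\<in>{m+1..A}. exp (-c*j*h)) \<le> exp (-c*m*h)/c"
proof (cases "A \<ge> m")
  case True
  have "h * (\<Sum>j\<in>{m+1..A}. exp (-c*j*h)) \<le> (exp (-c*m*h) - exp (-c*A*h))/c"
    using True
  proof (induction A rule: int_ge_induct)
    case base
    then show ?case by simp
  next
    case (step A)
    have "{m+1..A+1} = insert (A+1) {m+1..A}" using step.hyps by auto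
    then have "h * (\<Sum>j\<in>{m+1..A+1}. exp (-c*j*h)) = h * exp (-c*(A+1)*h) + h * (\<Sum>j\<in>{m+1..A}. exp (-c*j*h))"
      by (simp add: distrib_left algebra_simps)
    also have "\<dots> \<le> h * exp (-c*(A+1)*h) + (exp (-c*m*h) - exp (-c*A*h))/c"
      using step.IH by simp
    also have "h * exp (-c*(A+1)*h) \<le> (exp (-c*A*h) - exp (-c*(A+1)*h))/c"
    proof -
      have "-c*A*h = -c*(A+1)*h + c*h" by (simp add: algebra_simps)
      then have e: "exp (-c*A*h) = exp (-c*(A+1)*h) * exp (c*h)"
        by (metis exp_add)
      have "c*h \<le> exp (c*h) - 1" using exp_ge_add_one_self[of "c*h"] by linarith
      then have "c * (h * exp (-c*(A+1)*h)) \<le> exp (-c*(A+1)*h) * (exp (c*h) - 1)"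
        by (metis exp_gt_zero less_imp_le mult.commute mult.left_commute mult_left_mono)
      then show ?thesis using assms(1) unfolding e by (simp add: field_simps)
    qed
    finally show ?case by (simp add: diff_divide_distrib)
  qed
  also have "\<dots> \<le> exp (-c*m*h)/c" using assms by (simp add: divide_right_mono)
  finally show ?thesis .
next
  case False
  then have "{m+1..A} = {}" by auto
  then show ?thesis using assms by simp
qed

lemma Fb:
  fixes f :: "complex \<Rightarrow> complex" and z :: complex
  assumes bf: "cmod (f (sinh z)) \<le> K * cmod (1 + (sinh z)^2) powr (-(\<gamma>+1)/2)"
    and K0: "K > 0" and g0: "\<gamma> > 0" and c0: "cosh (Re z) * cos (Im z) > 0"
  shows "cmod (f (sinh z) * cosh z) \<le> K * (cosh (Re z) * cos (Im z)) powr (-\<gamma>)"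
proof -
  define r where "r = cmod (cosh z)"
  have rc: "cosh (Re z) * cos (Im z) \<le> r" unfolding r_def by (rule norm_cosh_ge)
  have r0: "r > 0" using rc c0 by linarith
  have "1 + (sinh z)^2 = (cosh z)^2" by (simp add: cosh_square_eq)
  then have "cmod (1 + (sinh z)^2) = r^2" by (simp add: r_def norm_power)
  also have "r^2 = r powr 2" using r0 powr_numeral[of r "num.Bit0 num.One"] by simp
  finally have "cmod (1 + (sinh z)^2) = r powr 2" .
  then have e1: "cmod (1 + (sinh z)^2) powr (-(\<gamma>+1)/2) = r powr (-(\<gamma>+1))"
  proof -
    have "2 * (-(\<gamma>+1)/2) = -(\<gamma>+1)" by simp
    then show ?thesis using \<open>cmod (1 + (sinh z)^2) = r powr 2\<close> by (simp only: powr_powr)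
  qed
  have "cmod (f (sinh z) * cosh z) = cmod (f (sinh z)) * r" by (simp add: norm_mult r_def)
  also have "\<dots> \<le> (K * r powr (-(\<gamma>+1))) * r"
    using bf e1 r0 by (intro mult_right_mono) auto
  also have "\<dots> = K * (r powr (-(\<gamma>+1)) * r powr 1)" using r0 by simp
  also have "r powr (-(\<gamma>+1)) * r powr 1 = r powr (-\<gamma>)"
    by (simp only: powr_add[symmetric]) simp
  also have "r powr (-\<gamma>) \<le> (cosh (Re z) * cos (Im z)) powr (-\<gamma>)"
    using rc c0 g0 by (intro powr_mono2') auto
  finally show ?thesis using K0 by (simp add: mult_left_mono)
qed

lemma Fb2:
  fixes x y \<delta> \<gamma> :: real
  assumes "\<bar>y\<bar> \<le> \<delta>" "\<delta> < pi/2" "\<gamma> \<ge> 0"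
  shows "cosh x * cos y > 0"
    and "(cosh x * cos y) powr (-\<gamma>) \<le> (2 / cos \<delta>) powr \<gamma> * exp (-\<gamma>*\<bar>x\<bar>)"
proof -
  have cd: "cos \<delta> > 0" using assms by (intro cos_gt_zero_pi) auto
  have cy: "cos \<delta> \<le> cos y"
  proof -
    have "cos \<delta> \<le> cos \<bar>y\<bar>" using assms by (intro cos_monotone_0_pi_le) auto
    then show ?thesis by simp
  qed
  have ch: "exp \<bar>x\<bar> / 2 \<le> cosh x" by (rule cosh_ge_half_exp_abs)
  have lb: "exp \<bar>x\<bar> / 2 * cos \<delta> \<le> cosh x * cos y"
    using ch cy cd by (intro mult_mono) auto
  have lb0: "exp \<bar>x\<bar> / 2 * cos \<delta> > 0" using cd by simp
  show "cosh x * cos y > 0" using lb lb0 by linarith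
  have "(cosh x * cos y) powr (-\<gamma>) \<le> (exp \<bar>x\<bar> / 2 * cos \<delta>) powr (-\<gamma>)"
    using lb lb0 assms(3) by (intro powr_mono2') auto
  also have "(exp \<bar>x\<bar> / 2 * cos \<delta>) = exp \<bar>x\<bar> * (cos \<delta> / 2)" by simp
  also have "(exp \<bar>x\<bar> * (cos \<delta> / 2)) powr (-\<gamma>) = exp \<bar>x\<bar> powr (-\<gamma>) * (cos \<delta> / 2) powr (-\<gamma>)"
    using cd by (intro powr_mult)
  also have "exp \<bar>x\<bar> powr (-\<gamma>) = exp (-\<gamma>*\<bar>x\<bar>)" by (simp add: exp_powr_real mult.commute)
  also have "(cos \<delta> / 2) powr (-\<gamma>) = inverse ((cos \<delta> / 2) powr \<gamma>)" by (rule powr_minus)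
  also have "\<dots> = inverse (cos \<delta> powr \<gamma> / 2 powr \<gamma>)" using cd by (subst powr_divide) auto
  also have "\<dots> = 2 powr \<gamma> / cos \<delta> powr \<gamma>" by simp
  also have "\<dots> = (2 / cos \<delta>) powr \<gamma>" using cd by (subst powr_divide) auto
  finally show "(cosh x * cos y) powr (-\<gamma>) \<le> (2 / cos \<delta>) powr \<gamma> * exp (-\<gamma>*\<bar>x\<bar>)"
    by (simp only: mult.commute)
qed

lemma cov:
  fixes f :: "complex \<Rightarrow> complex"
  assumes ai: "(\<lambda>x. f (of_real (sinh x)) * of_real (cosh x)) absolutely_integrable_on UNIV"
  shows "integral UNIV (\<lambda>t::real. f (of_real t)) = integral UNIV (\<lambda>x. f (of_real (sinh x)) * of_real (cosh x))"
proof -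
  define Fr where "Fr = (\<lambda>x. f (of_real (sinh x)) * complex_of_real (cosh x))"
  define I where "I = integral UNIV Fr"
  have hI: "(Fr has_integral I) UNIV"
    using ai unfolding Fr_def I_def absolutely_integrable_on_def by (auto intro: integrable_integral)
  have surj: "sinh ` (UNIV::real set) = UNIV"
    by (auto simp: image_iff intro!: exI[of _ "arsinh _"] sinh_arsinh_real)
  have "((\<lambda>t. f (of_real t) \<bullet> b) has_integral (I \<bullet> b)) UNIV" if b: "b \<in> Basis" for b
  proof -
    have abs_b: "(\<lambda>x. Fr x \<bullet> b) absolutely_integrable_on UNIV"
      using ai absolutely_integrable_componentwise_iff[where f=Fr and A=UNIV] b unfolding Fr_def by blast
    have int_b: "integral UNIV (\<lambda>x. Fr x \<bullet> b) = I \<bullet> b"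
      using hI b has_integral_componentwise_iff[where f=Fr and y=I and A=UNIV] integral_unique by blast
    have eq: "Fr x \<bullet> b = \<bar>cosh x\<bar> * (f (of_real (sinh x)) \<bullet> b)" for x
    proof -
      have "Fr x = cosh x *\<^sub>R f (of_real (sinh x))" by (simp add: Fr_def scaleR_conv_of_real mult.commute)
      then show ?thesis by simp
    qed
    have der: "\<And>x. x \<in> UNIV \<Longrightarrow> (sinh has_real_derivative cosh x) (at x within UNIV)"
      by (auto intro!: derivative_eq_intros)
    have "(\<lambda>x. \<bar>cosh x\<bar> * (f (of_real (sinh x)) \<bullet> b)) absolutely_integrable_on UNIV \<and>
          integral UNIV (\<lambda>x. \<bar>cosh x\<bar> * (f (of_real (sinh x)) \<bullet> b)) = I \<bullet> b"
      using abs_b int_b unfolding eq by simp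
    then have "(\<lambda>t. f (of_real t) \<bullet> b) absolutely_integrable_on (sinh ` UNIV) \<and>
          integral (sinh ` UNIV) (\<lambda>t. f (of_real t) \<bullet> b) = I \<bullet> b"
      using has_absolute_integral_change_of_variables_1'[of UNIV sinh cosh "\<lambda>t. f (of_real t) \<bullet> b" "I \<bullet> b", OF _ der]
      by (simp add: inj_on_def)
    then show ?thesis unfolding surj
      by (metis absolutely_integrable_on_def integrable_integral)
  qed
  then have "((\<lambda>t. f (of_real t)) has_integral I) UNIV"
    by (subst has_integral_componentwise_iff) blast
  then show ?thesis unfolding I_def Fr_def by (rule integral_unique)
qed

lemma sum_tail_bound:
  fixes g :: "int \<Rightarrow> complex" and h c K :: real and m A :: int
  assumes "h > 0" "c > 0" "K \<ge> 0"
    and b: "\<And>j. j \<in> {m+1..A} \<Longrightarrow> cmod (g j) \<le> K * exp (-c*j*h)"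
  shows "cmod (of_real h * (\<Sum>j\<in>{m+1..A}. g j)) \<le> K * exp (-c*m*h) / c"
proof -
  have "cmod (of_real h * (\<Sum>j\<in>{m+1..A}. g j)) \<le> h * (\<Sum>j\<in>{m+1..A}. cmod (g j))"
    using assms(1) norm_sum[of g "{m+1..A}"] by (simp add: norm_mult)
  also have "\<dots> \<le> h * (\<Sum>j\<in>{m+1..A}. K * exp (-c*j*h))"
    using assms(1) b by (intro mult_left_mono sum_mono) auto
  also have "\<dots> = K * (h * (\<Sum>j\<in>{m+1..A}. exp (-c*j*h)))"
    by (simp add: sum_distrib_left algebra_simps)
  also have "\<dots> \<le> K * (exp (-c*m*h)/c)"
    using geo_int[OF assms(2,1)] assms(3) by (intro mult_left_mono) auto
  finally show ?thesis by simp
qed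

lemma trunc:
  fixes F :: "complex \<Rightarrow> complex" and h \<alpha> \<beta> Ka Kb :: real and M N A :: int
  assumes h0: "h > 0" and a0: "\<alpha> > 0" and b0: "\<beta> > 0" and "Ka \<ge> 0" "Kb \<ge> 0"
    and MN: "M \<ge> 0" "N \<ge> 0" "M \<le> A" "N \<le> A"
    and left: "\<And>x. x < 0 \<Longrightarrow> cmod (F (of_real x)) \<le> Ka * exp (-\<alpha>*\<bar>x\<bar>)"
    and right: "\<And>x. x \<ge> 0 \<Longrightarrow> cmod (F (of_real x)) \<le> Kb * exp (-\<beta>*\<bar>x\<bar>)"
  shows "cmod (of_real h * (\<Sum>k=-A..A. F (of_real (of_int k * h))) - of_real h * (\<Sum>k=-M..N. F (of_real (of_int k * h))))
         \<le> Ka * exp (-\<alpha>*M*h) / \<alpha> + Kb * exp (-\<beta>*N*h) / \<beta>"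
proof -
  define g where "g = (\<lambda>k::int. F (of_real (of_int k * h)))"
  have split: "{-A..A} = {-A..-M-1} \<union> ({-M..N} \<union> {N+1..A})" using MN by auto
  have "(\<Sum>k=-A..A. g k) = (\<Sum>k=-A..-M-1. g k) + ((\<Sum>k=-M..N. g k) + (\<Sum>k=N+1..A. g k))"
    unfolding split using MN by (subst sum.union_disjoint, auto)+
  moreover have "(\<Sum>k=-A..-M-1. g k) = (\<Sum>j=M+1..A. g (-j))"
  proof -
    have eq: "{-A..-M-1} = uminus ` {M+1..A}" by (auto simp: image_iff intro!: exI[of _ "- _"])
    have "(\<Sum>k=-A..-M-1. g k) = sum g (uminus ` {M+1..A})" by (simp only: eq)
    also have "\<dots> = sum (g \<circ> uminus) {M+1..A}" by (rule sum.reindex) (simp add: inj_on_def)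
    finally show ?thesis by simp
  qed
  ultimately have "of_real h * (\<Sum>k=-A..A. g k) - of_real h * (\<Sum>k=-M..N. g k)
       = of_real h * (\<Sum>j=M+1..A. g (-j)) + of_real h * (\<Sum>k=N+1..A. g k)"
    by (simp add: algebra_simps)
  then have "cmod (of_real h * (\<Sum>k=-A..A. g k) - of_real h * (\<Sum>k=-M..N. g k))
       \<le> cmod (of_real h * (\<Sum>j=M+1..A. g (-j))) + cmod (of_real h * (\<Sum>k=N+1..A. g k))"
    by (metis norm_triangle_ineq)
  also have "\<dots> \<le> Ka * exp (-\<alpha>*M*h) / \<alpha> + Kb * exp (-\<beta>*N*h) / \<beta>"
  proof (intro add_mono sum_tail_bound)
    fix j assume j: "j \<in> {M+1..A}"
    then have "real_of_int j > 0" using MN by simp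
    then have "- (real_of_int j * h) < 0" using h0 by simp
    then have "cmod (F (of_real (- (real_of_int j * h)))) \<le> Ka * exp (-\<alpha>*\<bar>- (real_of_int j * h)\<bar>)"
      by (rule left)
    then show "cmod (g (-j)) \<le> Ka * exp (-\<alpha>*j*h)"
      using \<open>real_of_int j > 0\<close> h0 by (simp add: g_def abs_mult mult.assoc)
  next
    fix j assume j: "j \<in> {N+1..A}"
    then have "real_of_int j > 0" using MN by simp
    then have "real_of_int j * h \<ge> 0" using h0 by simp
    then have "cmod (F (of_real (real_of_int j * h))) \<le> Kb * exp (-\<beta>*\<bar>real_of_int j * h\<bar>)"
      by (rule right)
    then show "cmod (g j) \<le> Kb * exp (-\<beta>*j*h)"
      using \<open>real_of_int j > 0\<close> h0 by (simp add: g_def abs_mult mult.assoc)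
  qed (use assms in auto)
  finally show ?thesis unfolding g_def .
qed

lemma sinh_cor: "sinh (complex_of_real x) = of_real (sinh x)"
  by (simp add: sinh_field_def sinh_def exp_of_real flip: exp_of_real)

lemma cosh_cor: "cosh (complex_of_real x) = of_real (cosh x)"
  by (simp add: cosh_field_def cosh_def flip: exp_of_real)

lemma per_delta:
  fixes F :: "complex \<Rightarrow> complex" and S :: complex and h d \<delta> B \<mu> T :: real and A0 :: nat
  assumes holo: "F holomorphic_on {z. \<bar>Im z\<bar> < d}"
    and \<delta>0: "0 < \<delta>" and \<delta>d: "\<delta> < d" and h0: "h > 0" and \<mu>0: "\<mu> > 0" and B0: "B \<ge> 0"
    and bnd: "\<And>z. \<bar>Im z\<bar> \<le> \<delta> \<Longrightarrow> cmod (F z) \<le> B * exp (-\<mu> * \<bar>Re z\<bar>)"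
    and tr: "\<And>A::nat. A \<ge> A0 \<Longrightarrow> cmod (of_real h * (\<Sum>k=-int A..int A. F (of_real (of_int k * h))) - S) \<le> T"
  shows "cmod (integral UNIV (\<lambda>x. F (of_real x)) - S)
           \<le> 4 * exp (-2*pi*\<delta>/h) / (1 - exp (-2*pi*\<delta>/h)) * B / \<mu> + T"
proof -
  define Gr where "Gr = (\<lambda>x::real. F (of_real x))"
  define X where "X = (\<lambda>A::nat. (real A + 1/2) * h)"
  define D where "D = 4 * exp (-2*pi*\<delta>/h) / (1 - exp (-2*pi*\<delta>/h)) * B / \<mu>"
  define I where "I = integral UNIV Gr"
  have d0: "d > 0" using \<delta>0 \<delta>d by simp
  have contF: "continuous_on {z. \<bar>Im z\<bar> < d} F" by (rule holomorphic_on_imp_continuous_on[OF holo])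
  have contGr: "continuous_on UNIV Gr"
    unfolding Gr_def
    by (rule continuous_on_compose2[OF contF]) (auto intro!: continuous_intros simp: d0)
  have bGr: "cmod (Gr x) \<le> B * exp (-\<mu>*\<bar>x\<bar>)" for x
    using bnd[of "of_real x"] \<delta>0 by (simp add: Gr_def)
  have lim: "(\<lambda>A. integral {-X A..X A} Gr) \<longlonglongrightarrow> I"
    using limit_integral(2)[OF contGr \<mu>0 h0 bGr] by (simp add: X_def I_def)
  have lim1: "(\<lambda>A. cmod (I - integral {-X A..X A} Gr)) \<longlonglongrightarrow> 0"
  proof -
    have "(\<lambda>A. integral {-X A..X A} Gr - I) \<longlonglongrightarrow> 0" using lim by (rule LIM_zero)
    then have "(\<lambda>A. cmod (integral {-X A..X A} Gr - I)) \<longlonglongrightarrow> 0" by (rule tendsto_norm_zero)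
    then show ?thesis by (simp add: norm_minus_commute)
  qed
  have lim2: "(\<lambda>A::nat. exp (-\<mu> * X A)) \<longlonglongrightarrow> 0"
    unfolding X_def using \<mu>0 h0 by real_asymp
  have lim3: "(\<lambda>A. cmod (I - integral {-X A..X A} Gr) + D + 6 * \<delta> * B * exp (-\<mu> * X A) + T)
               \<longlonglongrightarrow> 0 + D + 6 * \<delta> * B * 0 + T"
    by (intro tendsto_intros lim1 lim2)
  have ev: "\<forall>\<^sub>F A in sequentially. cmod (I - S) \<le> cmod (I - integral {-X A..X A} Gr) + D + 6 * \<delta> * B * exp (-\<mu> * X A) + T"
    unfolding eventually_sequentially
  proof (intro exI[of _ A0] allI impI)
    fix A :: nat assume A: "A \<ge> A0"
    define s where "s = of_real h * (\<Sum>k=-int A..int A. F (of_real (of_int k * h)))"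
    have "cmod (I - S) \<le> cmod (I - integral {-X A..X A} Gr) + cmod (integral {-X A..X A} Gr - s) + cmod (s - S)"
      using tri3[of "I - integral {-X A..X A} Gr" "integral {-X A..X A} Gr - s" "s - S"] by simp
    also have "cmod (integral {-X A..X A} Gr - s) = cmod (s - integral {-X A..X A} Gr)"
      by (rule norm_minus_commute)
    also have "\<dots> \<le> D + 6 * \<delta> * B * exp (-\<mu> * X A)"
      unfolding s_def X_def D_def Gr_def
      by (rule disc_finite[OF holo \<delta>0 \<delta>d h0 \<mu>0 B0 bnd])
    also have "cmod (s - S) \<le> T" unfolding s_def by (rule tr[OF A])
    finally show "cmod (I - S) \<le> cmod (I - integral {-X A..X A} Gr) + D + 6 * \<delta> * B * exp (-\<mu> * X A) + T"
      by simp
  qed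
  have "cmod (I - S) \<le> 0 + D + 6 * \<delta> * B * 0 + T"
    by (rule tendsto_lowerbound[OF lim3 ev]) simp
  then show ?thesis unfolding I_def Gr_def D_def by simp
qed

lemma final_mono:
  fixes K a b e1 e2 \<alpha> \<mu> :: real
  assumes "K \<ge> 0" "0 < \<mu>" "\<mu> \<le> \<alpha>" "0 \<le> a" "a \<le> b" "0 \<le> e1" "e1 \<le> e2"
  shows "K * a * e1 / \<alpha> \<le> K * b * e2 / \<mu>"
proof -
  have "K * a * e1 \<le> K * b * e2" using assms by (intro mult_mono mult_nonneg_nonneg) auto
  moreover have "0 \<le> K * b * e2" using assms by simp
  ultimately show ?thesis using assms by (intro frac_le) auto
qed

theorem theorem3:
  fixes f :: "complex \<Rightarrow> complex"
    and d K \<alpha> \<beta> :: real and n :: nat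
  assumes "0 < d" "d < pi / 2"
    and "f analytic_on (sinh ` strip d)"
    and "0 < K" "0 < \<alpha>" "0 < \<beta>"
    and "\<And>z. z \<in> sinh ` strip_minus d \<Longrightarrow>
           cmod (f z) \<le> K * cmod (1 + z^2) powr (-(\<alpha> + 1) / 2)"
    and "\<And>z. z \<in> sinh ` strip_plus d \<Longrightarrow>
           cmod (f z) \<le> K * cmod (1 + z^2) powr (-(\<beta> + 1) / 2)"
    and "0 < n"
  shows
    "let \<mu> = min \<alpha> \<beta>; \<nu> = max \<alpha> \<beta>;
         h = sqrt (2 * pi * d / (\<mu> * real n));
         M = (if \<mu> = \<alpha> then int n else \<lceil>\<beta> * real n / \<alpha>\<rceil>);
         N = (if \<mu> = \<alpha> then \<lceil>\<alpha> * real n / \<beta>\<rceil> else int n);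
         C\<^sub>1 = 2 powr (\<nu> + 1) * K / \<mu> *
               (2 / ((1 - exp (- sqrt (2 * pi * d * \<mu>))) * cos d powr \<nu>) + 1)
     in cmod (integral UNIV (\<lambda>t::real. f (complex_of_real t))
              - complex_of_real h * (\<Sum>k = -M..N.
                  f (sinh (complex_of_real (real_of_int k * h))) * cosh (complex_of_real (real_of_int k * h))))
        \<le> C\<^sub>1 * exp (- sqrt (2 * pi * d * \<mu> * real n))"
proof -
  note d0 = assms(1) and dpi = assms(2) and an = assms(3) and K0 = assms(4)
    and a0 = assms(5) and b0 = assms(6) and bm = assms(7) and bp = assms(8) and n0 = assms(9)
  define \<mu> where "\<mu> = min \<alpha> \<beta>"
  define \<nu> where "\<nu> = max \<alpha> \<beta>"
  define h where "h = sqrt (2 * pi * d / (\<mu> * real n))"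
  define M where "M = (if \<mu> = \<alpha> then int n else \<lceil>\<beta> * real n / \<alpha>\<rceil>)"
  define N where "N = (if \<mu> = \<alpha> then \<lceil>\<alpha> * real n / \<beta>\<rceil> else int n)"
  define C1 where "C1 = 2 powr (\<nu> + 1) * K / \<mu> *
               (2 / ((1 - exp (- sqrt (2 * pi * d * \<mu>))) * cos d powr \<nu>) + 1)"
  define F where "F = (\<lambda>z. f (sinh z) * cosh z)"
  define S where "S = complex_of_real h * (\<Sum>k = -M..N.
                  f (sinh (complex_of_real (real_of_int k * h))) * cosh (complex_of_real (real_of_int k * h)))"
  define s where "s = sqrt (2 * pi * d * \<mu> * real n)"
  define s1 where "s1 = sqrt (2 * pi * d * \<mu>)"
  have n1: "real n \<ge> 1" using n0 by simp
  have \<mu>0: "\<mu> > 0" using a0 b0 by (simp add: \<mu>_def)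
  have \<mu>a: "\<mu> \<le> \<alpha>" and \<mu>b: "\<mu> \<le> \<beta>" by (simp_all add: \<mu>_def)
  have \<nu>a: "\<alpha> \<le> \<nu>" and \<nu>b: "\<beta> \<le> \<nu>" by (simp_all add: \<nu>_def)
  have \<nu>0: "\<nu> \<ge> 0" using \<nu>a a0 by simp
  have mn0: "\<mu> * real n > 0" using \<mu>0 n1 by simp
  have h0: "h > 0" using d0 mn0 by (simp add: h_def)
  have s0: "s > 0"
  proof -
    have "2*pi*d*(\<mu>*real n) > 0" using d0 mn0 by simp
    then show ?thesis by (simp add: s_def mult.assoc)
  qed
  have hs1: "2 * pi * d / h = s"
  proof -
    have "h * s = sqrt (2 * pi * d / (\<mu> * real n) * (2 * pi * d * \<mu> * real n))"
      unfolding h_def s_def real_sqrt_mult ..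
    also have "2 * pi * d / (\<mu> * real n) * (2 * pi * d * \<mu> * real n) = (2 * pi * d)^2"
      using \<mu>0 n0 by (simp add: field_simps power2_eq_square)
    also have "sqrt ((2 * pi * d)^2) = 2 * pi * d" using d0 by simp
    finally show ?thesis using h0 by (simp add: field_simps)
  qed
  have hs2: "\<mu> * real n * h = s"
  proof -
    have "\<mu> * real n * h = sqrt ((\<mu> * real n)^2) * h" using mn0 by simp
    also have "\<dots> = sqrt ((\<mu> * real n)^2 * (2 * pi * d / (\<mu> * real n)))"
      unfolding h_def real_sqrt_mult ..
    also have "(\<mu> * real n)^2 * (2 * pi * d / (\<mu> * real n)) = 2 * pi * d * \<mu> * real n"
      using \<mu>0 n0 by (simp add: field_simps power2_eq_square)
    finally show ?thesis by (simp add: s_def)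
  qed
  have s1s: "s1 \<le> s" unfolding s_def s1_def
  proof (intro real_sqrt_le_mono)
    have "2*pi*d*\<mu> * 1 \<le> 2*pi*d*\<mu> * real n"
      using d0 \<mu>0 n1 by (intro mult_left_mono) auto
    then show "2 * pi * d * \<mu> \<le> 2 * pi * d * \<mu> * real n" by simp
  qed
  have s10: "s1 > 0" using d0 \<mu>0 by (simp add: s1_def)
  have "\<beta> * real n / \<alpha> \<ge> 0" "\<alpha> * real n / \<beta> \<ge> 0" using a0 b0 by simp_all
  then have M0: "M \<ge> 0" and N0: "N \<ge> 0" by (auto simp: M_def N_def)
  have aM: "\<alpha> * real_of_int M \<ge> \<mu> * real n"
  proof (cases "\<mu> = \<alpha>")
    case True then show ?thesis by (simp add: M_def)
  next
    case False
    then have "\<mu> = \<beta>" by (auto simp: \<mu>_def min_def split: if_splits)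
    have "\<beta> * real n / \<alpha> \<le> real_of_int M" using False by (simp add: M_def)
    then have "\<beta> * real n \<le> \<alpha> * real_of_int M" using a0 by (simp add: field_simps)
    then show ?thesis using \<open>\<mu> = \<beta>\<close> by simp
  qed
  have bN: "\<beta> * real_of_int N \<ge> \<mu> * real n"
  proof (cases "\<mu> = \<alpha>")
    case True
    have "\<alpha> * real n / \<beta> \<le> real_of_int N" using True by (simp add: N_def)
    then have "\<alpha> * real n \<le> \<beta> * real_of_int N" using b0 by (simp add: field_simps)
    then show ?thesis using True by simp
  next
    case False
    then have "\<mu> = \<beta>" by (auto simp: \<mu>_def min_def split: if_splits)
    then show ?thesis using False by (simp add: N_def)
  qed
  have stripeq: "strip d = {z. \<bar>Im z\<bar> < d}" by (simp add: strip_def)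
  have holoF: "F holomorphic_on {z. \<bar>Im z\<bar> < d}"
  proof -
    have "f holomorphic_on sinh ` strip d" by (rule analytic_imp_holomorphic[OF an])
    moreover have "sinh holomorphic_on strip d"
    proof -
      have "sinh = (\<lambda>z::complex. (exp z - exp (-z)) / 2)" by (rule ext) (simp add: sinh_field_def)
      moreover have "(\<lambda>z::complex. (exp z - exp (-z)) / 2) holomorphic_on strip d" by (intro holomorphic_intros) auto
      ultimately show ?thesis by simp
    qed
    ultimately have "(f \<circ> sinh) holomorphic_on strip d" by (intro holomorphic_on_compose)
    then have "(\<lambda>z. f (sinh z)) holomorphic_on strip d" by (simp add: o_def)
    moreover have "cosh holomorphic_on strip d"
    proof -
      have "cosh = (\<lambda>z::complex. (exp z + exp (-z)) / 2)" by (rule ext) (simp add: cosh_field_def)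
      moreover have "(\<lambda>z::complex. (exp z + exp (-z)) / 2) holomorphic_on strip d" by (intro holomorphic_intros) auto
      ultimately show ?thesis by simp
    qed
    ultimately show ?thesis unfolding F_def stripeq[symmetric] by (intro holomorphic_intros)
  qed
  have side: "cmod (F z) \<le> K * (2 / cos \<delta>) powr (if Re z < 0 then \<alpha> else \<beta>) * exp (-(if Re z < 0 then \<alpha> else \<beta>) * \<bar>Re z\<bar>)"
    if \<delta>: "0 \<le> \<delta>" "\<delta> < d" "\<bar>Im z\<bar> \<le> \<delta>" for \<delta> z
  proof -
    define \<gamma> where "\<gamma> = (if Re z < 0 then \<alpha> else \<beta>)"
    have g0: "\<gamma> > 0" using a0 b0 by (simp add: \<gamma>_def)
    have \<delta>pi: "\<delta> < pi/2" using \<delta> dpi by simp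
    have zs: "z \<in> strip d" using \<delta> by (simp add: strip_def)
    have bf: "cmod (f (sinh z)) \<le> K * cmod (1 + (sinh z)^2) powr (-(\<gamma>+1)/2)"
    proof (cases "Re z < 0")
      case True
      then have "sinh z \<in> sinh ` strip_minus d" using zs by (auto simp: strip_minus_def)
      then show ?thesis using bm True by (simp add: \<gamma>_def)
    next
      case False
      then have "sinh z \<in> sinh ` strip_plus d" using zs by (auto simp: strip_plus_def)
      then show ?thesis using bp False by (simp add: \<gamma>_def)
    qed
    have c0: "cosh (Re z) * cos (Im z) > 0" by (rule Fb2(1)[OF \<delta>(3) \<delta>pi, of \<gamma>]) (use g0 in simp)
    have "cmod (F z) \<le> K * (cosh (Re z) * cos (Im z)) powr (-\<gamma>)"
      unfolding F_def by (rule Fb[where f=f and z=z, OF bf K0 g0 c0])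
    also have "\<dots> \<le> K * ((2 / cos \<delta>) powr \<gamma> * exp (-\<gamma>*\<bar>Re z\<bar>))"
      using Fb2(2)[OF \<delta>(3) \<delta>pi, of \<gamma> "Re z"] g0 K0 by (intro mult_left_mono) auto
    finally show ?thesis by (simp add: \<gamma>_def mult.assoc)
  qed
  have unif: "cmod (F z) \<le> K * (2 / cos \<delta>) powr \<nu> * exp (-\<mu> * \<bar>Re z\<bar>)"
    if \<delta>: "0 \<le> \<delta>" "\<delta> < d" "\<bar>Im z\<bar> \<le> \<delta>" for \<delta> z
  proof -
    define \<gamma> where "\<gamma> = (if Re z < 0 then \<alpha> else \<beta>)"
    have cd: "cos \<delta> > 0" using \<delta> dpi by (intro cos_gt_zero_pi) auto
    have cd1: "cos \<delta> \<le> 1" by simp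
    have cd2: "cos \<delta> \<le> 2" using cd1 by linarith
    have base: "1 \<le> 2 / cos \<delta>" using cd cd2 by (simp add: field_simps)
    have "(2 / cos \<delta>) powr \<gamma> \<le> (2 / cos \<delta>) powr \<nu>"
      using base \<nu>a \<nu>b by (intro powr_mono) (auto simp: \<gamma>_def)
    moreover have "exp (-\<gamma> * \<bar>Re z\<bar>) \<le> exp (-\<mu> * \<bar>Re z\<bar>)"
      using \<mu>a \<mu>b by (auto simp: \<gamma>_def intro!: mult_right_mono)
    ultimately have "K * (2 / cos \<delta>) powr \<gamma> * exp (-\<gamma> * \<bar>Re z\<bar>) \<le> K * (2 / cos \<delta>) powr \<nu> * exp (-\<mu> * \<bar>Re z\<bar>)"
      using K0 by (intro mult_mono mult_left_mono) auto
    then show ?thesis using side[OF \<delta>] by (simp add: \<gamma>_def)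
  qed
  have Fr: "f (of_real (sinh x)) * of_real (cosh x) = F (of_real x)" for x
    by (simp add: F_def sinh_cor cosh_cor)
  have contF: "continuous_on UNIV (\<lambda>x::real. F (of_real x))"
    by (rule continuous_on_compose2[OF holomorphic_on_imp_continuous_on[OF holoF]])
       (auto intro!: continuous_intros simp: d0)
  have bF0: "cmod (F (of_real x)) \<le> K * (2 / cos 0) powr \<nu> * exp (-\<mu> * \<bar>x\<bar>)" for x
    using unif[of 0 "of_real x"] d0 by simp
  have "(\<lambda>x::real. F (of_real x)) absolutely_integrable_on UNIV"
    by (rule limit_integral(1)[OF contF \<mu>0 h0 bF0])
  then have intEq: "integral UNIV (\<lambda>t::real. f (of_real t)) = integral UNIV (\<lambda>x. F (of_real x))"
    using cov[of f] by (simp add: Fr)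
  define T where "T = 2 * (K * 2 powr \<nu> * exp (-s) / \<mu>)"
  have tr: "cmod (of_real h * (\<Sum>k=-int A..int A. F (of_real (of_int k * h))) - S) \<le> T"
    if A: "A \<ge> nat (max M N)" for A :: nat
  proof -
    have SF: "S = of_real h * (\<Sum>k=-M..N. F (of_real (of_int k * h)))" by (simp add: S_def F_def)
    have left: "cmod (F (of_real x)) \<le> (K * 2 powr \<alpha>) * exp (-\<alpha>*\<bar>x\<bar>)" if "x < 0" for x
      using side[of 0 "of_real x"] d0 that by simp
    have right: "cmod (F (of_real x)) \<le> (K * 2 powr \<beta>) * exp (-\<beta>*\<bar>x\<bar>)" if "x \<ge> 0" for x
      using side[of 0 "of_real x"] d0 that by simp
    have "cmod (of_real h * (\<Sum>k=-int A..int A. F (of_real (of_int k * h))) - S)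
          \<le> (K * 2 powr \<alpha>) * exp (-\<alpha>*M*h) / \<alpha> + (K * 2 powr \<beta>) * exp (-\<beta>*N*h) / \<beta>"
      unfolding SF using A M0 N0 K0
      by (intro trunc[OF h0 a0 b0 _ _ M0 N0 _ _ left right]) auto
    also have "(K * 2 powr \<alpha>) * exp (-\<alpha>*M*h) / \<alpha> \<le> K * 2 powr \<nu> * exp (-s) / \<mu>"
    proof (rule final_mono)
      show "exp (-\<alpha>*M*h) \<le> exp (-s)"
        unfolding hs2[symmetric] using aM h0 by (simp add: mult_right_mono)
    qed (use K0 \<mu>0 \<mu>a \<nu>a in auto)
    also have "(K * 2 powr \<beta>) * exp (-\<beta>*N*h) / \<beta> \<le> K * 2 powr \<nu> * exp (-s) / \<mu>"
    proof (rule final_mono)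
      show "exp (-\<beta>*N*h) \<le> exp (-s)"
        unfolding hs2[symmetric] using bN h0 by (simp add: mult_right_mono)
    qed (use K0 \<mu>0 \<mu>b \<nu>b in auto)
    finally show ?thesis by (simp add: T_def ac_simps)
  qed
  define D where "D = (\<lambda>\<delta>. 4 * exp (-2*pi*\<delta>/h) / (1 - exp (-2*pi*\<delta>/h)) * (K * (2 / cos \<delta>) powr \<nu>) / \<mu>)"
  define L where "L = cmod (integral UNIV (\<lambda>t::real. f (complex_of_real t)) - S)"
  have perd: "L \<le> D \<delta> + T" if "0 < \<delta>" "\<delta> < d" for \<delta>
    unfolding L_def intEq D_def
  proof (rule per_delta[OF holoF that h0 \<mu>0 _ _ tr])
    show "0 \<le> K * (2 / cos \<delta>) powr \<nu>" using K0 by simp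
    show "\<And>z. \<bar>Im z\<bar> \<le> \<delta> \<Longrightarrow> cmod (F z) \<le> K * (2 / cos \<delta>) powr \<nu> * exp (- \<mu> * \<bar>Re z\<bar>)"
      using unif that by simp
  qed auto
  have cd: "cos d > 0" using d0 dpi by (intro cos_gt_zero_pi) auto
  have q1: "1 - exp (-2*pi*d/h) \<noteq> 0" using d0 h0 by simp
  have limD: "(D \<longlongrightarrow> D d) (at_left d)"
    unfolding D_def using q1 cd \<mu>0
    by (intro tendsto_intros tendsto_ident_at) auto
  have "L \<le> D d + T"
  proof (rule tendsto_lowerbound)
    show "((\<lambda>\<delta>. D \<delta> + T) \<longlongrightarrow> D d + T) (at_left d)" by (intro tendsto_intros limD)
    show "\<forall>\<^sub>F \<delta> in at_left d. L \<le> D \<delta> + T"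
      using eventually_at_left_real[OF d0] by eventually_elim (auto intro: perd)
  qed simp
  also have "D d + T \<le> C1 * exp (-s)"
  proof -
    have e: "-2*pi*d/h = -s" using hs1 by simp
    define P where "P = 4 * exp (-s) * (K * (2 powr \<nu> / cos d powr \<nu>)) / \<mu>"
    have P0: "P \<ge> 0" using K0 \<mu>0 cd by (simp add: P_def)
    have "D d = P / (1 - exp (-s))"
      unfolding D_def e P_def using cd by (simp add: powr_divide)
    also have "\<dots> \<le> P / (1 - exp (-s1))"
      using P0 s1s s10 by (intro divide_left_mono) (auto intro!: mult_pos_pos)
    finally have Dd: "D d \<le> P / (1 - exp (-s1))" .
    have "C1 * exp (-s) = P / (1 - exp (-s1)) + T"
    proof -
      have "1 - exp (-s1) \<noteq> 0" using s10 by simp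
      then show ?thesis using cd \<mu>0
        by (simp add: C1_def P_def T_def s1_def powr_add field_simps)
    qed
    then show ?thesis using Dd by simp
  qed
  finally have "L \<le> C1 * exp (-s)" .
  then show ?thesis
    unfolding L_def S_def s_def C1_def h_def M_def N_def \<mu>_def \<nu>_def Let_def .
qed

end
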